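(* Let $m,n\ge1$, and for each $i\in[m]=\{1,\dots,m\}$ let $f_i:\mathbb{R}^n\to\mathbb{R}$ be differentiable with $s_i$-Lipschitz gradient ($s_i>0$) and $c_i$-strongly convex ($c_i>0$). Let $\alpha_i>0$ with $\sum_i\alpha_i=1$, $\beta_i>0$, $\delta>0$, and $0<\sigma_i<\frac{\sqrt{2c_i}}{\sqrt{2c_i}+\sqrt{\beta_i}}$. Let $\{w^k\}=\{(u^k,\lambda^k,z^k)\}_{k\ge0}$, with $u^k=(u_1^k,\dots,u_m^k)\in\mathbb{R}^{mn}$, $\lambda^k=(\lambda_1^k,\dots,\lambda_m^k)\in\mathbb{R}^{mn}$, $z^k\in\mathbb{R}^n$, be generated from arbitrary initial points by: for $k\ge0$, $i\in[m]$, (i) $u_i^{k+1}$ satisfies $\|e_i^k(u_i^{k+1})\|\le\sigma_i\|e_i^k(u_i^k)\|$, where $e_i^k(u_i)=\nabla f_i(u_i)-\lambda_i^k+\beta_i(u_i-z^k)$; (ii) $\lambda_i^{k+1}=\lambda_i^k-\beta_i(u_i^{k+1}-z^k)$; (iii) $z^{k+1}=\frac{1}{1+\delta}\cdot\frac{\sum_{i}\alpha_i(\beta_iu_i^{k+1}-\lambda_i^{k+1})}{\sum_i\alpha_i\beta_i}+\frac{\delta}{1+\delta}z^k$. Then for every $k\ge0$ and every $w=(u,\lambda,z)\in\mathbb{R}^{mn}\times\mathbb{R}^{mn}\times\mathbb{R}^n$, $$(w^{k+1}-w)^{\top}F(w^{k+1})\le(u^{k+1}-u)^{\top}\nabla_uL_{\alpha,\beta}(u^{k+1},\lambda^k,z^k)+\tfrac12\Big(\|v^k-v\|_{H_1}^2-\|v^{k+1}-v\|_{H_1}^2-\|v^k-v^{k+1}\|_{H_1}^2\Big),$$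 where $v=(\lambda,z)$, $v^k=(\lambda^k,z^k)$, and $$H_1=\begin{pmatrix}I_\alpha I_\beta^{-1}& I_\alpha B\\ B^{\top}I_\alpha&(1+\delta)B^{\top}I_\alpha I_\beta B\end{pmatrix}\succ0.$$
   Context: Notation: $B=(I_n,\dots,I_n)^{\top}\in\mathbb{R}^{mn\times n}$ ($m$ copies of the $n\times n$ identity); $I_\alpha=\mathrm{diag}(\alpha_1I_n,\dots,\alpha_mI_n)$ and $I_\beta=\mathrm{diag}(\beta_1I_n,\dots,\beta_mI_n)$; $\nabla f(u)=(\nabla f_1(u_1),\dots,\nabla f_m(u_m))\in\mathbb{R}^{mn}$. The augmented Lagrangian is $L_{\alpha,\beta}(u,\lambda,z)=\sum_{i=1}^m\alpha_i\big(f_i(u_i)-\lambda_i^{\top}(u_i-z)+\frac{\beta_i}{2}\|u_i-z\|^2\big)$, so $\nabla_uL_{\alpha,\beta}(u,\lambda,z)$ has $i$-th block $\alpha_i(\nabla f_i(u_i)-\lambda_i+\beta_i(u_i-z))$. The map $F$ is $F(w)=\big(I_\alpha(\nabla f(u)-\lambda),\ I_\alpha(u-Bz),\ B^{\top}I_\alpha\lambda\big)$. For a symmetric positive definite matrix $H$, $\|x\|_H=(x^{\top}Hx)^{1/2}$. *)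

theory Defs
  imports "HOL-Analysis.Analysis"
begin

text \<open>Agents are indexed by a finite type 'm (so m = CARD('m) >= 1);
  vectors of R^n are real^'n (n = CARD('n) >= 1).
  A point u in R^{mn} is a function 'm => real^'n (u_i = u i).\<close>

definition strongly_convex_on :: "real \<Rightarrow> ('a::real_inner \<Rightarrow> real) \<Rightarrow> bool" where
  "strongly_convex_on c f \<longleftrightarrow>
     (\<forall>x y. \<forall>t::real. 0 \<le> t \<and> t \<le> 1 \<longrightarrow>
        f (t *\<^sub>R x + (1 - t) *\<^sub>R y) \<le> t * f x + (1 - t) * f y - c / 2 * t * (1 - t) * (norm (x - y))\<^sup>2)"

definition F_op :: "('m::finite \<Rightarrow> real) \<Rightarrow> ('m \<Rightarrow> real^'n \<Rightarrow> real^'n)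
      \<Rightarrow> ('m \<Rightarrow> real^'n) \<times> ('m \<Rightarrow> real^'n) \<times> (real^'n)
      \<Rightarrow> ('m \<Rightarrow> real^'n) \<times> ('m \<Rightarrow> real^'n) \<times> (real^'n)" where
  "F_op \<alpha> g w = (case w of (u, lam, z) \<Rightarrow>
     ((\<lambda>i. \<alpha> i *\<^sub>R (g i (u i) - lam i)),
      (\<lambda>i. \<alpha> i *\<^sub>R (u i - z)),
      (\<Sum>i\<in>UNIV. \<alpha> i *\<^sub>R lam i)))"

definition wdot :: "('m::finite \<Rightarrow> real^'n) \<times> ('m \<Rightarrow> real^'n) \<times> (real^'n)
      \<Rightarrow> ('m \<Rightarrow> real^'n) \<times> ('m \<Rightarrow> real^'n) \<times> (real^'n) \<Rightarrow> real" where
  "wdot w w' = (case w of (u, l, z) \<Rightarrow> case w' of (u', l', z') \<Rightarrow>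
      (\<Sum>i\<in>UNIV. u i \<bullet> u' i) + (\<Sum>i\<in>UNIV. l i \<bullet> l' i) + z \<bullet> z')"

definition udot :: "('m::finite \<Rightarrow> real^'n) \<Rightarrow> ('m \<Rightarrow> real^'n) \<Rightarrow> real" where
  "udot u u' = (\<Sum>i\<in>UNIV. u i \<bullet> u' i)"

definition gradL :: "('m::finite \<Rightarrow> real) \<Rightarrow> ('m \<Rightarrow> real) \<Rightarrow> ('m \<Rightarrow> real^'n \<Rightarrow> real^'n)
      \<Rightarrow> ('m \<Rightarrow> real^'n) \<Rightarrow> ('m \<Rightarrow> real^'n) \<Rightarrow> real^'n \<Rightarrow> ('m \<Rightarrow> real^'n)" where
  "gradL \<alpha> \<beta> g u lam z = (\<lambda>i. \<alpha> i *\<^sub>R (g i (u i) - lam i + \<beta> i *\<^sub>R (u i - z)))"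

text \<open>The quadratic form v^T H_1 v for v = (lambda, z), with
  H_1 = [[I_alpha I_beta^{-1}, I_alpha B], [B^T I_alpha, (1+delta) B^T I_alpha I_beta B]],
  written out block by block.\<close>
definition H1sq :: "('m::finite \<Rightarrow> real) \<Rightarrow> ('m \<Rightarrow> real) \<Rightarrow> real
      \<Rightarrow> ('m \<Rightarrow> real^'n) \<times> (real^'n) \<Rightarrow> real" where
  "H1sq \<alpha> \<beta> \<delta> v = (case v of (lam, z) \<Rightarrow>
      (\<Sum>i\<in>UNIV. (\<alpha> i / \<beta> i) * (lam i \<bullet> lam i))
      + (\<Sum>i\<in>UNIV. \<alpha> i * (lam i \<bullet> z))
      + (\<Sum>i\<in>UNIV. \<alpha> i * (z \<bullet> lam i))
      + (1 + \<delta>) * (\<Sum>i\<in>UNIV. \<alpha> i * \<beta> i) * (z \<bullet> z))"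

end

theory Submission
  imports Defs
begin

definition Hb :: "('m::finite \<Rightarrow> real) \<Rightarrow> ('m \<Rightarrow> real) \<Rightarrow> real
      \<Rightarrow> ('m \<Rightarrow> real^'n) \<Rightarrow> real^'n \<Rightarrow> ('m \<Rightarrow> real^'n) \<Rightarrow> real^'n \<Rightarrow> real" where
  "Hb \<alpha> \<beta> \<delta> l z l' z' =
      (\<Sum>i\<in>UNIV. (\<alpha> i / \<beta> i) * (l i \<bullet> l' i))
      + (\<Sum>i\<in>UNIV. \<alpha> i * (l i \<bullet> z'))
      + (\<Sum>i\<in>UNIV. \<alpha> i * (z \<bullet> l' i))
      + (1 + \<delta>) * (\<Sum>i\<in>UNIV. \<alpha> i * \<beta> i) * (z \<bullet> z')"

lemma polar:
  fixes a b :: "'m::finite \<Rightarrow> real^'n"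
  shows "H1sq \<alpha> \<beta> \<delta> (a, x) - H1sq \<alpha> \<beta> \<delta> (b, y) - H1sq \<alpha> \<beta> \<delta> (a - b, x - y)
     = 2 * Hb \<alpha> \<beta> \<delta> (a - b) (x - y) b y"
proof -
  have 1: "(\<Sum>i\<in>UNIV. (\<alpha> i / \<beta> i) * (a i \<bullet> a i)) - (\<Sum>i\<in>UNIV. (\<alpha> i / \<beta> i) * (b i \<bullet> b i))
     - (\<Sum>i\<in>UNIV. (\<alpha> i / \<beta> i) * ((a - b) i \<bullet> (a - b) i)) = 2 * (\<Sum>i\<in>UNIV. (\<alpha> i / \<beta> i) * ((a-b) i \<bullet> b i))"
    by (simp add: sum_subtractf[symmetric] sum_distrib_left inner_diff_left inner_diff_right inner_commute algebra_simps)
  have 2: "(\<Sum>i\<in>UNIV. \<alpha> i * (a i \<bullet> x)) - (\<Sum>i\<in>UNIV. \<alpha> i * (b i \<bullet> y))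
     - (\<Sum>i\<in>UNIV. \<alpha> i * ((a - b) i \<bullet> (x - y)))
     + ((\<Sum>i\<in>UNIV. \<alpha> i * (x \<bullet> a i)) - (\<Sum>i\<in>UNIV. \<alpha> i * (y \<bullet> b i))
     - (\<Sum>i\<in>UNIV. \<alpha> i * ((x - y) \<bullet> (a - b) i)))
     = 2 * (\<Sum>i\<in>UNIV. \<alpha> i * ((a-b) i \<bullet> y)) + 2 * (\<Sum>i\<in>UNIV. \<alpha> i * ((x - y) \<bullet> b i))"
    by (simp add: sum_subtractf[symmetric] sum.distrib[symmetric] sum_distrib_left inner_diff_left inner_diff_right inner_commute algebra_simps)
  have 3: "(1 + \<delta>) * S * (x \<bullet> x) - (1 + \<delta>) * S * (y \<bullet> y) - (1 + \<delta>) * S * ((x - y) \<bullet> (x - y))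
      = 2 * ((1 + \<delta>) * S * ((x - y) \<bullet> y))" for S
    by (simp add: inner_diff_left inner_diff_right inner_commute algebra_simps)
  show ?thesis unfolding H1sq_def Hb_def using 1 2 3[of "\<Sum>i\<in>UNIV. \<alpha> i * \<beta> i"] by simp
qed

lemma H1_pos:
  fixes \<alpha> \<beta> :: "'m::finite \<Rightarrow> real" and ll :: "'m \<Rightarrow> real^'n" and zz :: "real^'n"
  assumes ap: "\<And>i. \<alpha> i > 0" and bp: "\<And>i. \<beta> i > 0" and dp: "\<delta> > 0"
    and ne: "(ll, zz) \<noteq> ((\<lambda>i. 0), 0)"
  shows "H1sq \<alpha> \<beta> \<delta> (ll, zz) > 0"
proof -
  define t where "t i = \<alpha> i / \<beta> i * ((ll i + \<beta> i *\<^sub>R zz) \<bullet> (ll i + \<beta> i *\<^sub>R zz)) + \<delta> * \<alpha> i * \<beta> i * (zz \<bullet> zz)" for i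
  have e: "t i = (\<alpha> i / \<beta> i) * (ll i \<bullet> ll i) + \<alpha> i * (ll i \<bullet> zz) + \<alpha> i * (zz \<bullet> ll i) + (1 + \<delta>) * (\<alpha> i * \<beta> i) * (zz \<bullet> zz)" for i
    using bp[of i] unfolding t_def
    by (simp add: inner_add_left inner_add_right inner_commute field_simps power2_eq_square)
  have "H1sq \<alpha> \<beta> \<delta> (ll, zz) = sum t UNIV"
    unfolding H1sq_def e by (simp add: sum.distrib sum_distrib_left sum_distrib_right mult.assoc)
  moreover have nn: "t i \<ge> 0" for i using ap[of i] bp[of i] dp unfolding t_def
    by (intro add_nonneg_nonneg mult_nonneg_nonneg) auto
  moreover have "\<exists>i. t i > 0"
  proof (cases "zz = 0")
    case True
    then obtain i where "ll i \<noteq> 0" using ne by auto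
    then show ?thesis using ap[of i] bp[of i] True unfolding t_def by (intro exI[of _ i]) simp
  next
    case False
    then show ?thesis using ap bp dp nn unfolding t_def
      by (intro exI[of _ undefined]) (smt (verit) inner_gt_zero_iff mult_pos_pos mult_nonneg_nonneg divide_nonneg_nonneg inner_ge_zero)
  qed
  ultimately show ?thesis by (metis UNIV_I finite sum_pos2)
qed

theorem lemma1:
  fixes f :: "'m::finite \<Rightarrow> real^'n \<Rightarrow> real"
    and g :: "'m \<Rightarrow> real^'n \<Rightarrow> real^'n"
    and s c \<alpha> \<beta> \<sigma> :: "'m \<Rightarrow> real"
    and \<delta> :: real
    and u lam :: "nat \<Rightarrow> 'm \<Rightarrow> real^'n"
    and z :: "nat \<Rightarrow> real^'n"
  assumes grad: "\<And>i x. (f i has_derivative (\<lambda>h. g i x \<bullet> h)) (at x)"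
    and s_pos: "\<And>i. s i > 0"
    and lip: "\<And>i. (s i)-lipschitz_on UNIV (g i)"
    and c_pos: "\<And>i. c i > 0"
    and sconv: "\<And>i. strongly_convex_on (c i) (f i)"
    and alpha_pos: "\<And>i. \<alpha> i > 0"
    and alpha_sum: "(\<Sum>i\<in>UNIV. \<alpha> i) = 1"
    and beta_pos: "\<And>i. \<beta> i > 0"
    and delta_pos: "\<delta> > 0"
    and sigma_pos: "\<And>i. \<sigma> i > 0"
    and sigma_bd: "\<And>i. \<sigma> i < sqrt (2 * c i) / (sqrt (2 * c i) + sqrt (\<beta> i))"
    and step_u: "\<And>k i. norm (g i (u (Suc k) i) - lam k i + \<beta> i *\<^sub>R (u (Suc k) i - z k))
                   \<le> \<sigma> i * norm (g i (u k i) - lam k i + \<beta> i *\<^sub>R (u k i - z k))"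
    and step_lam: "\<And>k i. lam (Suc k) i = lam k i - \<beta> i *\<^sub>R (u (Suc k) i - z k)"
    and step_z: "\<And>k. z (Suc k) =
        (1 / (1 + \<delta>)) *\<^sub>R ((1 / (\<Sum>i\<in>UNIV. \<alpha> i * \<beta> i)) *\<^sub>R
            (\<Sum>i\<in>UNIV. \<alpha> i *\<^sub>R (\<beta> i *\<^sub>R u (Suc k) i - lam (Suc k) i)))
        + (\<delta> / (1 + \<delta>)) *\<^sub>R z k"
  shows "(\<forall>ll (zz::real^'n). (ll, zz) \<noteq> ((\<lambda>i. 0), 0) \<longrightarrow> H1sq \<alpha> \<beta> \<delta> (ll, zz) > 0) \<and>
    (\<forall>k uu ll zz.
      wdot (u (Suc k) - uu, lam (Suc k) - ll, z (Suc k) - zz)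
           (F_op \<alpha> g (u (Suc k), lam (Suc k), z (Suc k)))
      \<le> udot (u (Suc k) - uu) (gradL \<alpha> \<beta> g (u (Suc k)) (lam k) (z k))
         + 1/2 * (H1sq \<alpha> \<beta> \<delta> (lam k - ll, z k - zz)
                  - H1sq \<alpha> \<beta> \<delta> (lam (Suc k) - ll, z (Suc k) - zz)
                  - H1sq \<alpha> \<beta> \<delta> (lam k - lam (Suc k), z k - z (Suc k))))"
proof (intro conjI allI impI)
  fix ll :: "'m \<Rightarrow> real^'n" and zz :: "real^'n"
  assume "(ll, zz) \<noteq> ((\<lambda>i. 0), 0)"
  then show "H1sq \<alpha> \<beta> \<delta> (ll, zz) > 0" using H1_pos alpha_pos beta_pos delta_pos by blast
next
  fix k and uu ll :: "'m \<Rightarrow> real^'n" and zz :: "real^'n"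
  define S where "S = (\<Sum>i\<in>UNIV. \<alpha> i * \<beta> i)"
  have Spos: "S > 0" unfolding S_def using alpha_pos beta_pos
    by (intro sum_pos) (auto intro: mult_pos_pos)
  let ?L = "lam k" and ?L' = "lam (Suc k)" and ?U = "u (Suc k)" and ?Z = "z k" and ?Z' = "z (Suc k)"
  have A: "\<beta> i *\<^sub>R (?U i - ?Z) = ?L i - ?L' i" for i using step_lam[of k i] by simp
  have A2: "?U i - ?Z' = (1 / \<beta> i) *\<^sub>R (?L i - ?L' i) + (?Z - ?Z')" for i
  proof -
    have "?U i - ?Z = (1 / \<beta> i) *\<^sub>R (?L i - ?L' i)" using A[of i] beta_pos[of i]
      by (metis (no_types, lifting) less_irrefl scaleR_scaleR divide_self_if times_divide_eq_left mult_1 scaleR_one)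
    then show ?thesis by (simp add: algebra_simps)
  qed
  define P where "P = (\<Sum>i\<in>UNIV. \<alpha> i *\<^sub>R (\<beta> i *\<^sub>R ?U i - ?L' i))"
  have B1: "((1 + \<delta>) * S) *\<^sub>R ?Z' = P + (\<delta> * S) *\<^sub>R ?Z"
    using step_z[of k] delta_pos Spos unfolding P_def S_def[symmetric]
    by (simp add: scaleR_add_right)
  have "P = (\<Sum>i\<in>UNIV. (\<alpha> i * \<beta> i) *\<^sub>R ?Z + \<alpha> i *\<^sub>R (?L i - ?L' i) - \<alpha> i *\<^sub>R ?L' i)"
    unfolding P_def
  proof (rule sum.cong)
    fix i
    have "\<beta> i *\<^sub>R ?U i = \<beta> i *\<^sub>R ?Z + (?L i - ?L' i)" using A[of i] by (simp add: algebra_simps)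
    then show "\<alpha> i *\<^sub>R (\<beta> i *\<^sub>R ?U i - ?L' i) = (\<alpha> i * \<beta> i) *\<^sub>R ?Z + \<alpha> i *\<^sub>R (?L i - ?L' i) - \<alpha> i *\<^sub>R ?L' i"
      by (simp only: scaleR_add_right scaleR_diff_right scaleR_scaleR)
  qed simp
  also have "\<dots> = S *\<^sub>R ?Z + (\<Sum>i\<in>UNIV. \<alpha> i *\<^sub>R (?L i - ?L' i)) - (\<Sum>i\<in>UNIV. \<alpha> i *\<^sub>R ?L' i)"
    unfolding S_def by (simp add: sum.distrib sum_subtractf scaleR_sum_left)
  finally have B: "(\<Sum>i\<in>UNIV. \<alpha> i *\<^sub>R ?L' i) = (\<Sum>i\<in>UNIV. \<alpha> i *\<^sub>R (?L i - ?L' i)) + ((1 + \<delta>) * S) *\<^sub>R (?Z - ?Z')"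
    using B1 by (simp add: algebra_simps)
  have p1: "(\<Sum>i\<in>UNIV. (?U - uu) i \<bullet> (\<alpha> i *\<^sub>R (g i (?U i) - ?L' i)))
      = udot (?U - uu) (gradL \<alpha> \<beta> g ?U ?L ?Z)"
    unfolding udot_def gradL_def
  proof (rule sum.cong)
    fix i
    have eq: "g i (?U i) - ?L' i = g i (?U i) - ?L i + \<beta> i *\<^sub>R (?U i - ?Z)"
      using step_lam[of k i] by (simp add: algebra_simps)
    then show "(?U - uu) i \<bullet> (\<alpha> i *\<^sub>R (g i (?U i) - ?L' i)) = (?U - uu) i \<bullet> (\<alpha> i *\<^sub>R (g i (?U i) - ?L i + \<beta> i *\<^sub>R (?U i - ?Z)))"
      by (simp only: eq)
  qed simp
  have p2: "(\<Sum>i\<in>UNIV. (?L' - ll) i \<bullet> (\<alpha> i *\<^sub>R (?U i - ?Z')))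
     = (\<Sum>i\<in>UNIV. (\<alpha> i / \<beta> i) * ((?L - ?L') i \<bullet> (?L' - ll) i)) + (\<Sum>i\<in>UNIV. \<alpha> i * ((?Z - ?Z') \<bullet> (?L' - ll) i))"
    unfolding A2 sum.distrib[symmetric]
    by (rule sum.cong) (simp_all add: inner_add_right inner_commute algebra_simps)
  have p3: "(?Z' - zz) \<bullet> (\<Sum>i\<in>UNIV. \<alpha> i *\<^sub>R ?L' i)
     = (\<Sum>i\<in>UNIV. \<alpha> i * ((?L - ?L') i \<bullet> (?Z' - zz))) + (1 + \<delta>) * S * ((?Z - ?Z') \<bullet> (?Z' - zz))"
    unfolding B by (simp add: inner_add_right inner_sum_right inner_commute)
  have pol: "H1sq \<alpha> \<beta> \<delta> (?L - ll, ?Z - zz) - H1sq \<alpha> \<beta> \<delta> (?L' - ll, ?Z' - zz) - H1sq \<alpha> \<beta> \<delta> (?L - ?L', ?Z - ?Z')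
     = 2 * Hb \<alpha> \<beta> \<delta> (?L - ?L') (?Z - ?Z') (?L' - ll) (?Z' - zz)"
  proof -
    have e1: "?L - ll - (?L' - ll) = ?L - ?L'" by (simp add: fun_eq_iff)
    have e2: "?Z - zz - (?Z' - zz) = ?Z - ?Z'" by (simp add: algebra_simps)
    show ?thesis using polar[of \<alpha> \<beta> \<delta> "?L - ll" "?Z - zz" "?L' - ll" "?Z' - zz"] unfolding e1 e2 .
  qed
  show "wdot (?U - uu, ?L' - ll, ?Z' - zz) (F_op \<alpha> g (?U, ?L', ?Z'))
      \<le> udot (?U - uu) (gradL \<alpha> \<beta> g ?U ?L ?Z)
         + 1/2 * (H1sq \<alpha> \<beta> \<delta> (?L - ll, ?Z - zz)
                  - H1sq \<alpha> \<beta> \<delta> (?L' - ll, ?Z' - zz)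
                  - H1sq \<alpha> \<beta> \<delta> (?L - ?L', ?Z - ?Z'))"
    unfolding pol wdot_def F_op_def using p1 p2 p3 by (simp add: Hb_def S_def inner_commute)
qed

end
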